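(* Fix $\alpha>0$ and a threshold $\epsilon\in(0,1)$. Under the MVP-IBP model with $p$ features, let $\pi_j=\Phi(\beta_j)$ be the marginal occurrence probability of feature $j$, and let $c^{(\epsilon)}=\sum_{j=1}^p\mathds{1}(\pi_j>\epsilon)$ be the number of common features at threshold $\epsilon$. Then $$\lim_{p\to\infty}E(c^{(\epsilon)})=\alpha\exp\left\{-\Phi^{-1}(\epsilon)-\frac12\right\}.$$
   Context: MVP-IBP model with $p$ features: for $i=1,\dots,n$ and $j=1,\dots,p$, $y_{ij}=\mathds{1}(z_{ij}>0)$, $z_{ij}=\beta_j+\varepsilon_{ij}$, where $\beta_1,\dots,\beta_p$ are i.i.d. $N(\mu_p,\tau_p^2)$, the vectors $\bm{\varepsilon}_i$ are i.i.d. $N_p(\bm{0},\bm{\Sigma})$ independent of $\bm\beta$, with $\bm{\Sigma}$ a $p\times p$ positive definite correlation matrix, and $\tau_p=\sqrt{2\log p}$, $\mu_p=\sqrt{1+\tau_p^2}\,\Phi^{-1}\!\left(\frac{\alpha}{\alpha+p}\right)$, where $\Phi$ is the standard normal CDF. Marginally $\mathrm{pr}(y_{ij}=1\mid\beta_j)=\Phi(\beta_j)$. *)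

theory Defs
  imports "HOL-Probability.Probability"
begin

definition Phi :: "real \<Rightarrow> real" where
  "Phi x = measure (density lborel std_normal_density) {..x}"

definition Phi_inv :: "real \<Rightarrow> real" where
  "Phi_inv q = (THE x. Phi x = q)"

definition tau_p :: "nat \<Rightarrow> real" where
  "tau_p p = sqrt (2 * ln (real p))"

definition mu_p :: "real \<Rightarrow> nat \<Rightarrow> real" where
  "mu_p \<alpha> p = sqrt (1 + (tau_p p)\<^sup>2) * Phi_inv (\<alpha> / (\<alpha> + real p))"

end

theory Submission
  imports Defs "HOL-Real_Asymp.Real_Asymp"
begin

definition stdN :: "real measure" where "stdN = density lborel std_normal_density"

lemma stdN_real_distribution: "real_distribution stdN"
  unfolding stdN_def by (rule real_dist_normal_dist)

interpretation stdN: real_distribution stdN by (rule stdN_real_distribution)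

lemma Phi_cdf: "Phi = cdf stdN"
  by (simp add: fun_eq_iff Phi_def cdf_def stdN_def)

lemma stdN_emeasure: "A \<in> sets borel \<Longrightarrow> emeasure stdN A = (\<integral>\<^sup>+x. ennreal (std_normal_density x) * indicator A x \<partial>lborel)"
  unfolding stdN_def by (subst emeasure_density) auto

lemma stdN_singleton: "measure stdN {x} = 0"
proof -
  have "emeasure stdN {x} = 0"
    by (subst stdN_emeasure) (auto intro!: nn_integral_null_set)
  then show ?thesis by (simp add: measure_def)
qed

lemma Phi_cont: "isCont Phi x"
  unfolding Phi_cdf by (simp add: stdN.isCont_cdf stdN_singleton)


lemma stdN_sets[simp]: "sets stdN = sets borel" by simp

lemma Phi_mono_le: "x \<le> y \<Longrightarrow> Phi x \<le> Phi y"
  unfolding Phi_cdf by (rule stdN.cdf_nondecreasing)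

lemma tail_gt: "measure stdN {t<..} = 1 - Phi t"
proof -
  have "{t<..} = space stdN - {..t}" by auto
  then show ?thesis unfolding Phi_def stdN_def[symmetric] using stdN.prob_compl[of "{..t}"] by simp
qed

lemma tail_ge: "measure stdN {t..} = 1 - Phi t"
proof -
  have "{t..} = {t} \<union> {t<..}" by auto
  then have "measure stdN {t..} = measure stdN {t} + measure stdN {t<..}"
    using stdN.finite_measure_Union[of "{t}" "{t<..}"] by simp
  then show ?thesis by (simp add: stdN_singleton tail_gt)
qed

definition Qn :: "real \<Rightarrow> ennreal" where
  "Qn t = (\<integral>\<^sup>+x. ennreal (std_normal_density x) * indicator {t..} x \<partial>lborel)"

lemma Qn_eq: "Qn t = ennreal (1 - Phi t)"
proof -
  have "Qn t = emeasure stdN {t..}" unfolding Qn_def by (simp add: stdN_emeasure)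
  also have "\<dots> = ennreal (measure stdN {t..})" by (simp add: stdN.emeasure_eq_measure)
  finally show ?thesis by (simp add: tail_ge)
qed

lemma Phi_neg: "Phi (-t) = 1 - Phi t"
proof -
  have "emeasure stdN {..-t} = (\<integral>\<^sup>+x. ennreal (std_normal_density x) * indicator {..-t} x \<partial>lborel)"
    by (simp add: stdN_emeasure)
  also have "\<dots> = ennreal \<bar>-1\<bar> * (\<integral>\<^sup>+x. ennreal (std_normal_density (0 + -1 * x)) * indicator {..-t} (0 + -1 * x) \<partial>lborel)"
    by (rule nn_integral_real_affine) auto
  also have "\<dots> = Qn t" unfolding Qn_def
    by (auto simp: std_normal_density_def indicator_def intro!: nn_integral_cong)
  finally have "ennreal (Phi (-t)) = ennreal (1 - Phi t)"
    unfolding Qn_eq Phi_def stdN_def[symmetric] by (simp add: stdN.emeasure_eq_measure)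
  moreover have "Phi (-t) \<ge> 0" "1 - Phi t \<ge> 0" unfolding Phi_cdf
    using stdN.cdf_nonneg stdN.cdf_bounded_prob by (auto simp: algebra_simps)
  ultimately show ?thesis by simp
qed

lemma Phi_0: "Phi 0 = 1/2"
  using Phi_neg[of 0] by simp

lemma Phi_strict: assumes "x < y" shows "Phi x < Phi y"
proof -
  have d: "Phi y - Phi x = measure stdN {x<..y}"
    unfolding Phi_cdf using assms by (rule stdN.cdf_diff_eq)
  have "emeasure stdN {x<..y} \<noteq> 0"
  proof
    assume "emeasure stdN {x<..y} = 0"
    then have "(\<integral>\<^sup>+z. ennreal (std_normal_density z) * indicator {x<..y} z \<partial>lborel) = 0"
      by (simp add: stdN_emeasure)
    then have "AE z in lborel. ennreal (std_normal_density z) * indicator {x<..y} z = 0"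
      by (subst (asm) nn_integral_0_iff_AE) auto
    then have "AE z in lborel. z \<notin> {x<..y}"
      by eventually_elim (auto simp: std_normal_density_def indicator_def)
    then have "emeasure lborel {x<..y} = 0"
      by (subst (asm) AE_iff_measurable[of "{x<..y}"]) auto
    then show False using assms by simp
  qed
  then have "measure stdN {x<..y} > 0"
    by (simp add: stdN.emeasure_eq_measure zero_less_measure_iff)
  with d show ?thesis by simp
qed

lemma Phi_surj: assumes "0 < a" "a < 1" shows "\<exists>x. Phi x = a"
proof -
  have "eventually (\<lambda>x. Phi x < a) at_bot"
    using stdN.cdf_lim_at_bot assms unfolding Phi_cdf by (auto simp: order_tendsto_iff)
  then obtain L where L: "Phi L < a" by (auto simp: eventually_at_bot_linorder)
  have "eventually (\<lambda>x. Phi x > a) at_top"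
    using stdN.cdf_lim_at_top_prob assms unfolding Phi_cdf by (auto simp: order_tendsto_iff)
  then obtain N where N: "\<And>n. n \<ge> N \<Longrightarrow> Phi n > a" by (auto simp: eventually_at_top_linorder)
  define U where "U = max N L"
  have U: "Phi U > a" "U \<ge> L" using N unfolding U_def by auto
  have "continuous_on {L..U} Phi" using Phi_cont by (simp add: continuous_at_imp_continuous_on)
  then show ?thesis using IVT'[of Phi L a U] L U by force
qed

lemma Phi_inv_eq: assumes "Phi x = a" shows "Phi_inv a = x"
  unfolding Phi_inv_def
proof (rule the_equality)
  show "Phi x = a" by fact
  fix y assume "Phi y = a"
  then show "y = x" using Phi_strict[of x y] Phi_strict[of y x] assms by (cases x y rule: linorder_cases) auto
qed

lemma Phi_Phi_inv: "0 < a \<Longrightarrow> a < 1 \<Longrightarrow> Phi (Phi_inv a) = a"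
  using Phi_surj Phi_inv_eq by metis

lemma tail_upper: assumes t: "t > 0" shows "1 - Phi t \<le> std_normal_density t / t"
proof -
  define c where "c = 1/sqrt(2*pi)"
  define F where "F x = - (c * exp (-x\<^sup>2/2) / x)" for x :: real
  define f where "f x = c * exp (-x\<^sup>2/2) * (1 + 1/x\<^sup>2)" for x :: real
  have der: "DERIV F x :> f x" if "t \<le> x" for x
  proof -
    have "x > 0" using that t by simp
    show ?thesis unfolding F_def f_def
      using \<open>x > 0\<close> by (auto intro!: derivative_eq_intros simp: field_simps power2_eq_square)
  qed
  have lim: "(F \<longlongrightarrow> 0) at_top" unfolding F_def by real_asymp
  have pw: "std_normal_density x \<le> f x" for x
  proof -
    have h0: "0 \<le> c * exp (-x\<^sup>2/2)" by (simp add: c_def)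
    have h1: "1 \<le> 1 + 1/x\<^sup>2" by simp
    have "c * exp (-x\<^sup>2/2) * 1 \<le> c * exp (-x\<^sup>2/2) * (1 + 1/x\<^sup>2)"
      by (rule mult_left_mono[OF h1 h0])
    then show ?thesis by (simp add: f_def c_def std_normal_density_def)
  qed
  have "(\<integral>\<^sup>+x. ennreal (f x) * indicator {t..} x \<partial>lborel) = 0 - F t"
    by (rule nn_integral_FTC_atLeast[OF _ der _ lim]) (auto simp: f_def c_def)
  moreover have "Qn t \<le> (\<integral>\<^sup>+x. ennreal (f x) * indicator {t..} x \<partial>lborel)"
    unfolding Qn_def
    by (intro nn_integral_mono) (auto simp: indicator_def intro!: ennreal_leI pw)
  ultimately have "ennreal (1 - Phi t) \<le> ennreal (0 - F t)" by (simp add: Qn_eq)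
  moreover have "0 - F t = std_normal_density t / t" by (simp add: F_def c_def std_normal_density_def)
  moreover have "std_normal_density t / t \<ge> 0" using t by simp
  ultimately show ?thesis by simp
qed

lemma tail_lower: assumes t: "t \<ge> 2" shows "std_normal_density t * (1/t - 1/t^3) \<le> 1 - Phi t"
proof -
  define c where "c = 1/sqrt(2*pi)"
  define F where "F x = - (c * exp (-x\<^sup>2/2) * (1/x - 1/x^3))" for x :: real
  define f where "f x = c * exp (-x\<^sup>2/2) * (1 - 3/x^4)" for x :: real
  have der: "DERIV F x :> f x" if "t \<le> x" for x
  proof -
    have "x > 0" using that t by simp
    show ?thesis unfolding F_def f_def
      using \<open>x > 0\<close> by (auto intro!: derivative_eq_intros simp: field_simps power2_eq_square eval_nat_numeral)
  qed
  have nn: "0 \<le> f x" if "t \<le> x" for x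
  proof -
    have "16 \<le> x^4" using that t power_mono[of 2 x 4] by simp
    then have "3/x^4 \<le> 1" by (simp add: divide_le_eq)
    then show ?thesis unfolding f_def c_def by (simp add: zero_le_mult_iff)
  qed
  have lim: "(F \<longlongrightarrow> 0) at_top" unfolding F_def by real_asymp
  have pw: "f x \<le> std_normal_density x" for x
  proof -
    have h0: "0 \<le> c * exp (-x\<^sup>2/2)" by (simp add: c_def)
    have h1: "1 - 3/x^4 \<le> 1" by simp
    have "c * exp (-x\<^sup>2/2) * (1 - 3/x^4) \<le> c * exp (-x\<^sup>2/2) * 1"
      by (rule mult_left_mono[OF h1 h0])
    then show ?thesis by (simp add: f_def c_def std_normal_density_def)
  qed
  have "(\<integral>\<^sup>+x. ennreal (f x) * indicator {t..} x \<partial>lborel) = 0 - F t"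
    by (rule nn_integral_FTC_atLeast[OF _ der nn lim]) (auto simp: f_def c_def)
  moreover have "(\<integral>\<^sup>+x. ennreal (f x) * indicator {t..} x \<partial>lborel) \<le> Qn t"
    unfolding Qn_def
    by (intro nn_integral_mono) (auto simp: indicator_def intro!: ennreal_leI pw)
  ultimately have "ennreal (0 - F t) \<le> ennreal (1 - Phi t)" by (simp add: Qn_eq)
  moreover have "0 - F t = std_normal_density t * (1/t - 1/t^3)" by (simp add: F_def c_def std_normal_density_def)
  moreover have "1 - Phi t \<ge> 0" unfolding Phi_cdf using stdN.cdf_bounded_prob by (simp add: algebra_simps)
  ultimately show ?thesis by simp
qed

lemma Phi_gt_iff: assumes "0 < e" "e < 1" shows "Phi b > e \<longleftrightarrow> b > Phi_inv e"
proof -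
  have q: "Phi (Phi_inv e) = e" using Phi_Phi_inv assms by simp
  show ?thesis
  proof
    assume "Phi b > e"
    then show "b > Phi_inv e" using Phi_mono_le[of b "Phi_inv e"] q by (cases "b \<le> Phi_inv e") auto
  next
    assume "b > Phi_inv e"
    then show "Phi b > e" using Phi_strict q by metis
  qed
qed

lemma (in prob_space) std_tail_prob:
  assumes Z: "distributed M lborel Z std_normal_density"
  shows "measure M {\<omega>\<in>space M. Z \<omega> > s} = 1 - Phi s"
proof -
  have "{\<omega>\<in>space M. Z \<omega> > s} = Z -` {s<..} \<inter> space M" by auto
  then have "emeasure M {\<omega>\<in>space M. Z \<omega> > s} = (\<integral>\<^sup>+x. ennreal (std_normal_density x) * indicator {s<..} x \<partial>lborel)"
    using distributed_emeasure[OF Z, of "{s<..}"] by simp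
  also have "\<dots> = emeasure stdN {s<..}" by (simp add: stdN_emeasure)
  also have "\<dots> = ennreal (1 - Phi s)" by (simp add: stdN.emeasure_eq_measure tail_gt)
  finally show ?thesis
    using stdN.cdf_bounded_prob[of s] unfolding Phi_cdf[symmetric]
    by (simp add: emeasure_eq_measure)
qed

lemma expect_formula:
  assumes P: "prob_space M" and e: "0 < e" "e < 1" and s: "\<sigma> > 0"
    and D: "\<And>j. j \<in> {1..p} \<Longrightarrow> distributed M lborel (\<beta> j) (normal_density \<mu> \<sigma>)"
  shows "prob_space.expectation M (\<lambda>\<omega>. real (card {j \<in> {1..p}. Phi (\<beta> j \<omega>) > e}))
         = real p * (1 - Phi ((Phi_inv e - \<mu>) / \<sigma>))"
proof -
  interpret prob_space M by (rule P)
  define q where "q = Phi_inv e"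
  define A where "A j = {\<omega>\<in>space M. \<beta> j \<omega> > q}" for j
  have meas[measurable]: "\<beta> j \<in> borel_measurable M" if "j \<in> {1..p}" for j
    using distributed_measurable[OF D[OF that]] by simp
  have Asets: "A j \<in> sets M" if "j \<in> {1..p}" for j
    using meas[OF that] unfolding A_def by measurable
  have "expectation (\<lambda>\<omega>. real (card {j \<in> {1..p}. Phi (\<beta> j \<omega>) > e}))
      = expectation (\<lambda>\<omega>. \<Sum>j\<in>{1..p}. indicator (A j) \<omega>)"
  proof (rule Bochner_Integration.integral_cong[OF refl])
    fix \<omega> assume \<omega>: "\<omega> \<in> space M"
    have eq: "{j \<in> {1..p}. Phi (\<beta> j \<omega>) > e} = {1..p} \<inter> {j. \<omega> \<in> A j}"
      using \<omega> unfolding A_def q_def by (auto simp: Phi_gt_iff[OF e])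
    have "(\<Sum>j\<in>{1..p}. indicator (A j) \<omega>) = (\<Sum>j\<in>{1..p}. indicator {j. \<omega> \<in> A j} j :: real)"
      by (intro sum.cong refl) (simp add: indicator_def)
    also have "\<dots> = real (card ({1..p} \<inter> {j. \<omega> \<in> A j}))"
    proof -
      have "real (card ({1..p} \<inter> {j. \<omega> \<in> A j})) = (\<Sum>j\<in>{1..p} \<inter> {j. \<omega> \<in> A j}. 1)"
        by (rule real_of_card)
      also have "\<dots> = (\<Sum>j\<in>{1..p}. if j \<in> {j. \<omega> \<in> A j} then 1 else 0)"
        by (rule sum.inter_restrict) simp
      also have "\<dots> = (\<Sum>j\<in>{1..p}. indicator {j. \<omega> \<in> A j} j)"
        by (intro sum.cong refl) (simp add: indicator_def)
      finally show ?thesis by simp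
    qed
    finally have "(\<Sum>j\<in>{1..p}. indicator (A j) \<omega>) = real (card ({1..p} \<inter> {j. \<omega> \<in> A j}))" .
    then show "real (card {j \<in> {1..p}. Phi (\<beta> j \<omega>) > e}) = (\<Sum>j\<in>{1..p}. indicator (A j) \<omega>)"
      by (simp only: eq)
  qed
  also have "\<dots> = (\<Sum>j\<in>{1..p}. expectation (indicator (A j)))"
  proof (rule Bochner_Integration.integral_sum)
    fix j assume "j \<in> {1..p}"
    then show "integrable M (indicator (A j) :: 'a \<Rightarrow> real)"
      using Asets by (intro integrable_real_indicator) (auto simp: less_top[symmetric])
  qed
  also have "\<dots> = (\<Sum>j\<in>{1..p}. 1 - Phi ((q - \<mu>) / \<sigma>))"
  proof (rule sum.cong[OF refl])
    fix j assume j: "j \<in> {1..p}"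
    have Z: "distributed M lborel (\<lambda>x. (\<beta> j x - \<mu>) / \<sigma>) std_normal_density"
      using D[OF j] normal_standard_normal_convert[OF s] by simp
    have "A j = {\<omega>\<in>space M. (\<beta> j \<omega> - \<mu>) / \<sigma> > (q - \<mu>) / \<sigma>}"
      unfolding A_def using s by (auto simp: divide_less_cancel)
    then have "measure M (A j) = 1 - Phi ((q - \<mu>) / \<sigma>)"
      using std_tail_prob[OF Z] by simp
    then show "expectation (indicator (A j)) = 1 - Phi ((q - \<mu>) / \<sigma>)"
      using Asets[OF j] sets.sets_into_space by (simp add: Int_absorb2)
  qed
  finally show ?thesis by (simp add: q_def)
qed

lemma mills: "((\<lambda>u. (1 - Phi u) * u / std_normal_density u) \<longlongrightarrow> 1) at_top"
proof (rule tendsto_sandwich[of "\<lambda>u::real. 1 - 1/u\<^sup>2" _ _ "\<lambda>u. 1"])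
  have pos: "std_normal_density u > 0" for u by (simp add: std_normal_density_def)
  show "eventually (\<lambda>u. 1 - 1/u\<^sup>2 \<le> (1 - Phi u) * u / std_normal_density u) at_top"
    using eventually_ge_at_top[of 2]
  proof eventually_elim
    case (elim u)
    have "std_normal_density u * (1/u - 1/u^3) \<le> 1 - Phi u" using tail_lower elim by simp
    then have "std_normal_density u * (1/u - 1/u^3) * u / std_normal_density u \<le> (1 - Phi u) * u / std_normal_density u"
      using elim pos[of u] by (intro divide_right_mono mult_right_mono) auto
    moreover have "std_normal_density u * (1/u - 1/u^3) * u / std_normal_density u = 1 - 1/u\<^sup>2"
      using elim pos[of u] by (simp add: field_simps power2_eq_square eval_nat_numeral)
    ultimately show ?case by simp
  qed
  show "eventually (\<lambda>u. (1 - Phi u) * u / std_normal_density u \<le> 1) at_top"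
    using eventually_gt_at_top[of 0]
  proof eventually_elim
    case (elim u)
    have "1 - Phi u \<le> std_normal_density u / u" using tail_upper elim by simp
    then have "(1 - Phi u) * u \<le> std_normal_density u" using elim by (simp add: le_divide_eq)
    then show ?case using pos[of u] by simp
  qed
  show "((\<lambda>u::real. 1 - 1/u\<^sup>2) \<longlongrightarrow> 1) at_top" by real_asymp
qed simp

lemma alg_id: fixes k u w x :: real assumes "w\<^sup>2 = 1 + u\<^sup>2"
  shows "(k*u + w*x)\<^sup>2 - x\<^sup>2 = (k*u)\<^sup>2 + 2*k*w*(x*u) + (x*u)\<^sup>2"
proof -
  have "(k*u + w*x)\<^sup>2 - x\<^sup>2 = (k*u)\<^sup>2 + 2*k*w*(x*u) + w\<^sup>2*x\<^sup>2 - x\<^sup>2"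
    by (simp add: power2_eq_square algebra_simps)
  also have "\<dots> = (k*u)\<^sup>2 + 2*k*w*(x*u) + (x*u)\<^sup>2" using assms by (simp add: power2_eq_square algebra_simps)
  finally show ?thesis .
qed

lemma sqrt2pi_le: "sqrt (2*pi) \<le> 9/2"
proof -
  have "2*pi \<le> (9/2)\<^sup>2" using pi_less_4 by (simp add: power2_eq_square)
  then have "sqrt (2*pi) \<le> sqrt ((9/2)\<^sup>2)" by (rule real_sqrt_le_mono)
  then show ?thesis by simp
qed

lemma x_bounds:
  fixes x a :: real
  assumes x: "x \<ge> 2" and a: "0 < a" and up: "a \<le> std_normal_density x / x"
    and lo: "std_normal_density x * (1/x - 1/x^3) \<le> a"
  shows "x\<^sup>2 \<le> -2 * ln a" and "-2*ln a - 2 * ln (6 * sqrt (-2 * ln a)) \<le> x\<^sup>2"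
proof -
  have sp: "sqrt (2*pi) \<ge> 1" using pi_ge_two by simp  
  have "std_normal_density x / x \<le> std_normal_density x" using x
    by (simp add: divide_le_eq std_normal_density_def)
  also have "\<dots> \<le> exp (-x\<^sup>2/2)" unfolding std_normal_density_def using sp
    by (simp add: divide_le_eq mult_le_cancel_left1)
  finally have "a \<le> exp (-x\<^sup>2/2)" using up by simp
  then have "ln a \<le> -x\<^sup>2/2" using a by (metis ln_exp ln_le_cancel_iff exp_gt_zero)
  then show up2: "x\<^sup>2 \<le> -2 * ln a" by simp
  have "exp (-x\<^sup>2/2) / (6*x) \<le> std_normal_density x * (1/x - 1/x^3)"
  proof -
    have eq1: "std_normal_density x * (1/x - 1/x^3) = exp (-x\<^sup>2/2) / x * ((1 - 1/x\<^sup>2) / sqrt (2*pi))"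
      using x by (simp add: std_normal_density_def field_simps power2_eq_square eval_nat_numeral)
    have K: "1/6 \<le> (1 - 1/x\<^sup>2) / sqrt (2*pi)"
    proof -
      have "1/x\<^sup>2 \<le> 1/4" using x power_mono[of 2 x 2] by (simp add: divide_le_eq)
      then have "3/4 \<le> 1 - 1/x\<^sup>2" by simp
      moreover have "sqrt (2*pi) \<le> 9/2" by (rule sqrt2pi_le)
      ultimately have "sqrt (2*pi) / 6 \<le> 1 - 1/x\<^sup>2" by simp
      then show ?thesis using sp by (simp add: le_divide_eq)
    qed
    have E: "exp (-x\<^sup>2/2) / x \<ge> 0" using x by simp
    have "exp (-x\<^sup>2/2) / x * (1/6) \<le> exp (-x\<^sup>2/2) / x * ((1 - 1/x\<^sup>2) / sqrt (2*pi))"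
      by (rule mult_left_mono[OF K E])
    moreover have "exp (-x\<^sup>2/2) / x * (1/6) = exp (-x\<^sup>2/2) / (6*x)" by simp
    ultimately show ?thesis unfolding eq1 by simp
  qed
  with lo have "exp (-x\<^sup>2/2) / (6*x) \<le> a" by simp
  then have "ln (exp (-x\<^sup>2/2) / (6*x)) \<le> ln a" using x a by (subst ln_le_cancel_iff) auto
  then have "-x\<^sup>2/2 - ln (6*x) \<le> ln a" using x by (simp add: ln_div)
  moreover have "ln (6*x) \<le> ln (6 * sqrt (-2 * ln a))"
  proof -
    have "x \<le> sqrt (-2 * ln a)" using up2 x by (simp add: real_le_rsqrt)
    then have "6*x \<le> 6 * sqrt (-2 * ln a)" by simp
    moreover have "0 < 6*x" using x by simp
    ultimately show ?thesis by (rule ln_mono)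
  qed
  ultimately show "-2*ln a - 2 * ln (6 * sqrt (-2 * ln a)) \<le> x\<^sup>2" by simp
qed

lemma main_limit:
  assumes al: "\<alpha> > 0" and e: "0 < \<epsilon>" "\<epsilon> < 1"
  shows "(\<lambda>p. real p * (1 - Phi ((Phi_inv \<epsilon> - mu_p \<alpha> p) / tau_p p))) \<longlonglongrightarrow> \<alpha> * exp (- Phi_inv \<epsilon> - 1/2)"
proof -
  define q where "q = Phi_inv \<epsilon>"
  define a where "a p = \<alpha> / (\<alpha> + real p)" for p :: nat
  define x where "x p = - Phi_inv (a p)" for p
  define \<tau> where "\<tau> p = tau_p p" for p
  define t where "t p = (q - mu_p \<alpha> p) / \<tau> p" for p
  define m where "m u = (1 - Phi u) * u / std_normal_density u" for u
  define s where "s p = sqrt (1 + (\<tau> p)\<^sup>2) / \<tau> p" for p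
  define r where "r p = x p / \<tau> p" for p
  have a_pos: "a p > 0" for p using al unfolding a_def by (simp add: add_pos_nonneg)
  have a_lt1: "a p < 1" if "p \<ge> 1" for p
  proof -
    have "\<alpha> < \<alpha> + real p" using that by simp
    then show ?thesis using al unfolding a_def by (simp add: divide_less_eq)
  qed
  have Qx: "1 - Phi (x p) = a p" if "p \<ge> 1" for p
  proof -
    have "Phi (- x p) = a p" unfolding x_def using Phi_Phi_inv[OF a_pos a_lt1[OF that]] by simp
    then show ?thesis using Phi_neg[of "x p"] by simp
  qed
  have a_lim: "a \<longlonglongrightarrow> 0" unfolding a_def using al by real_asymp
  have ev_big: "eventually (\<lambda>p. real p > \<alpha>) sequentially" by real_asymp
  have x_pos: "x p > 0" if "real p > \<alpha>" for p
  proof -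
    have p1: "p \<ge> 1" using that al by (cases p) auto
    have "a p < 1/2" using that al unfolding a_def by (simp add: divide_less_eq)
    then have "Phi (- x p) < Phi 0" unfolding x_def using Phi_Phi_inv[OF a_pos a_lt1[OF p1]] Phi_0 by simp
    then show ?thesis using Phi_mono_le[of 0 "- x p"] by (cases "x p > 0") auto
  qed
  have x_top: "filterlim x at_top sequentially"
    unfolding filterlim_at_top
  proof
    fix Z :: real
    define M where "M = max Z 2"
    define \<delta> where "\<delta> = std_normal_density M * (1/M - 1/M^3)"
    have M2: "M \<ge> 2" unfolding M_def by simp
    have "M * 1 < M * M^2" using M2 power_mono[of 2 M 2] by (intro mult_strict_left_mono) auto
    then have "M < M^3" by (simp add: eval_nat_numeral)
    then have "1/M^3 < 1/M" using M2 by (intro divide_strict_left_mono) auto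
    then have \<delta>pos: "\<delta> > 0" unfolding \<delta>_def by (simp add: std_normal_density_def)
    have \<delta>le: "\<delta> \<le> 1 - Phi M" unfolding \<delta>_def using tail_lower M2 by simp
    have "eventually (\<lambda>p. a p < \<delta>) sequentially" using a_lim \<delta>pos by (rule order_tendstoD)
    then show "eventually (\<lambda>p. Z \<le> x p) sequentially" using eventually_ge_at_top[of 1]
    proof eventually_elim
      case (elim p)
      show ?case
      proof (rule ccontr)
        assume "\<not> Z \<le> x p"
        then have "x p \<le> M" unfolding M_def by simp
        then have "Phi (x p) \<le> Phi M" by (rule Phi_mono_le)
        then have "\<delta> \<le> a p" using Qx[OF elim(2)] \<delta>le by simp
        then show False using elim(1) by simp
      qed
    qed
  qed
  have \<tau>_eq: "\<tau> = (\<lambda>p. sqrt (2 * ln (real p)))" by (simp add: fun_eq_iff \<tau>_def tau_p_def)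
  have lnp: "ln (real p) > 0" if "p \<ge> 2" for p using that by simp
  have \<tau>_pos: "\<tau> p > 0" if "p \<ge> 2" for p using lnp[OF that] by (simp add: \<tau>_eq)
  have \<tau>2: "(\<tau> p)\<^sup>2 = 2 * ln (real p)" if "p \<ge> 2" for p using lnp[OF that] by (simp add: \<tau>_eq)
  have inv_\<tau>: "(\<lambda>p. 1 / \<tau> p) \<longlonglongrightarrow> 0" unfolding \<tau>_eq by real_asymp
  have s_lim: "s \<longlonglongrightarrow> 1" unfolding s_def \<tau>_eq by real_asymp
  have ev_x2: "eventually (\<lambda>p. x p \<ge> 2) sequentially"
    using x_top by (simp add: filterlim_at_top)
  have ev_all: "eventually (\<lambda>p. p \<ge> 2 \<and> real p > \<alpha> \<and> x p \<ge> 2) sequentially"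
    using ev_big ev_x2 eventually_ge_at_top[of 2] by eventually_elim auto
  have r_lim: "r \<longlonglongrightarrow> 1"
  proof -
    define L where "L p = ln ((\<alpha> + real p) / \<alpha>)" for p
    have La: "-2 * ln (a p) = 2 * L p" for p
    proof -
      have "\<alpha> + real p > 0" using al by (simp add: add_pos_nonneg)
      then show ?thesis unfolding L_def a_def using al by (simp add: ln_div)
    qed
    have r2: "(\<lambda>p. (r p)\<^sup>2) \<longlonglongrightarrow> 1"
    proof (rule tendsto_sandwich[of "\<lambda>p. (L p - ln (6 * sqrt (2 * L p))) / ln (real p)" _ _ "\<lambda>p. L p / ln (real p)"])
      have bnds: "(x p)\<^sup>2 \<le> 2 * L p \<and> 2 * L p - 2 * ln (6 * sqrt (2 * L p)) \<le> (x p)\<^sup>2"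
        if "p \<ge> 2" "real p > \<alpha>" "x p \<ge> 2" for p
      proof -
        have p1: "p \<ge> 1" using that by simp
        have up: "a p \<le> std_normal_density (x p) / x p" using Qx[OF p1] tail_upper[of "x p"] that by simp
        have lo: "std_normal_density (x p) * (1 / x p - 1 / x p ^ 3) \<le> a p"
          using Qx[OF p1] tail_lower[of "x p"] that by simp
        show ?thesis using x_bounds[OF that(3) a_pos up lo, unfolded La[of p]] by simp
      qed
      show "eventually (\<lambda>p. (L p - ln (6 * sqrt (2 * L p))) / ln (real p) \<le> (r p)\<^sup>2) sequentially"
        using ev_all
      proof eventually_elim
        case (elim p)
        have "(r p)\<^sup>2 = (x p)\<^sup>2 / (2 * ln (real p))"
          unfolding r_def using \<tau>2[of p] elim by (simp add: power_divide)
        moreover have "(L p - ln (6 * sqrt (2 * L p))) \<le> (x p)\<^sup>2 / 2" using bnds[of p] elim by simp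
        ultimately show ?case using lnp[of p] elim by (simp add: divide_right_mono field_simps)
      qed
      show "eventually (\<lambda>p. (r p)\<^sup>2 \<le> L p / ln (real p)) sequentially"
        using ev_all
      proof eventually_elim
        case (elim p)
        have "(r p)\<^sup>2 = (x p)\<^sup>2 / (2 * ln (real p))"
          unfolding r_def using \<tau>2[of p] elim by (simp add: power_divide)
        moreover have "(x p)\<^sup>2 / 2 \<le> L p" using bnds[of p] elim by simp
        ultimately show ?case using lnp[of p] elim by (simp add: divide_right_mono field_simps)
      qed
      show "(\<lambda>p. (L p - ln (6 * sqrt (2 * L p))) / ln (real p)) \<longlonglongrightarrow> 1"
        unfolding L_def using al by real_asymp
      show "(\<lambda>p. L p / ln (real p)) \<longlonglongrightarrow> 1"
        unfolding L_def using al by real_asymp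
    qed
    then have "(\<lambda>p. sqrt ((r p)\<^sup>2)) \<longlonglongrightarrow> sqrt 1" by (rule tendsto_real_sqrt)
    moreover have "eventually (\<lambda>p. sqrt ((r p)\<^sup>2) = r p) sequentially"
      using ev_all
    proof eventually_elim
      case (elim p)
      then have "r p > 0" unfolding r_def using x_pos \<tau>_pos by simp
      then show ?case by simp
    qed
    ultimately show ?thesis by (simp add: tendsto_cong)
  qed
  have t_eq: "t p = q * (1 / \<tau> p) + s p * x p" if "p \<ge> 2" for p
  proof -
    have "mu_p \<alpha> p = - (sqrt (1 + (\<tau> p)\<^sup>2) * x p)"
      unfolding mu_p_def x_def a_def \<tau>_def by simp
    then show ?thesis unfolding t_def s_def using \<tau>_pos[OF that] by (simp add: field_simps)
  qed
  have tx_lim: "(\<lambda>p. t p / x p) \<longlonglongrightarrow> 1"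
  proof -
    have "(\<lambda>p. q * (1 / \<tau> p) * inverse (x p) + s p) \<longlonglongrightarrow> q * 0 * 0 + 1"
      by (intro tendsto_intros inv_\<tau> s_lim tendsto_inverse_0_at_top x_top)
    moreover have "eventually (\<lambda>p. q * (1 / \<tau> p) * inverse (x p) + s p = t p / x p) sequentially"
      using ev_all
    proof eventually_elim
      case (elim p)
      then have "x p > 0" by simp
      then show ?case using t_eq[of p] elim by (simp add: field_simps)
    qed
    ultimately show ?thesis by (simp add: tendsto_cong)
  qed
  have t_top: "filterlim t at_top sequentially"
  proof -
    have "filterlim (\<lambda>p. t p / x p * x p) at_top sequentially"
      by (rule filterlim_tendsto_pos_mult_at_top[OF tx_lim _ x_top]) simp
    moreover have "eventually (\<lambda>p. t p / x p * x p = t p) sequentially"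
      using ev_all by eventually_elim simp
    ultimately show ?thesis using filterlim_cong[OF refl refl] by metis
  qed
  have diff_lim: "(\<lambda>p. (t p)\<^sup>2 - (x p)\<^sup>2) \<longlonglongrightarrow> 2 * q + 1"
  proof -
    have "(\<lambda>p. (q * (1 / \<tau> p))\<^sup>2 + 2 * q * s p * r p + (r p)\<^sup>2) \<longlonglongrightarrow> (q * 0)\<^sup>2 + 2 * q * 1 * 1 + 1\<^sup>2"
      by (intro tendsto_intros inv_\<tau> s_lim r_lim)
    moreover have "eventually (\<lambda>p. (q * (1 / \<tau> p))\<^sup>2 + 2 * q * s p * r p + (r p)\<^sup>2 = (t p)\<^sup>2 - (x p)\<^sup>2) sequentially"
      using ev_all
    proof eventually_elim
      case (elim p)
      have tp: "\<tau> p > 0" using \<tau>_pos elim by simp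
      have "(s p)\<^sup>2 = 1 + (1 / \<tau> p)\<^sup>2" unfolding s_def using tp
        by (simp add: power_divide field_simps)
      from alg_id[OF this, of q "x p"]
      have "(q * (1 / \<tau> p) + s p * x p)\<^sup>2 - (x p)\<^sup>2 = (q * (1 / \<tau> p))\<^sup>2 + 2 * q * s p * (x p * (1 / \<tau> p)) + (x p * (1 / \<tau> p))\<^sup>2" .
      then show ?case using t_eq[of p] elim unfolding r_def by simp
    qed
    ultimately show ?thesis by (simp add: tendsto_cong)
  qed
  have mt: "(\<lambda>p. m (t p)) \<longlonglongrightarrow> 1"
    using filterlim_compose[OF mills t_top] unfolding m_def by simp
  have mx: "(\<lambda>p. m (x p)) \<longlonglongrightarrow> 1"
    using filterlim_compose[OF mills x_top] unfolding m_def by simp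
  have pa: "(\<lambda>p. real p * a p) \<longlonglongrightarrow> \<alpha>" unfolding a_def using al by real_asymp
  have xt: "(\<lambda>p. x p / t p) \<longlonglongrightarrow> 1"
    using tendsto_inverse[OF tx_lim] by simp
  have lim: "(\<lambda>p. (real p * a p) * (m (t p) / m (x p)) * (x p / t p) * exp (- (((t p)\<^sup>2 - (x p)\<^sup>2) / 2)))
      \<longlonglongrightarrow> \<alpha> * (1 / 1) * 1 * exp (- ((2 * q + 1) / 2))"
  proof -
    have d2: "(\<lambda>p. - (((t p)\<^sup>2 - (x p)\<^sup>2) / 2)) \<longlonglongrightarrow> - ((2 * q + 1) / (2::real))"
      by (intro tendsto_minus tendsto_divide diff_lim tendsto_const) simp
    show ?thesis
      by (intro tendsto_mult tendsto_divide tendsto_exp pa mt mx xt d2) simp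
  qed
  have ev_t: "eventually (\<lambda>p. t p \<ge> 2) sequentially"
    using t_top by (simp add: filterlim_at_top)
  have "eventually (\<lambda>p. (real p * a p) * (m (t p) / m (x p)) * (x p / t p) * exp (- (((t p)\<^sup>2 - (x p)\<^sup>2) / 2))
      = real p * (1 - Phi ((Phi_inv \<epsilon> - mu_p \<alpha> p) / tau_p p))) sequentially"
    using ev_all ev_t
  proof eventually_elim
    case (elim p)
    define T where "T = t p"
    define X where "X = x p"
    define A where "A = a p"
    define E where "E = exp (((t p)\<^sup>2 - (x p)\<^sup>2) / 2)"
    have T2: "T \<ge> 2" and X2: "X \<ge> 2" using elim unfolding T_def X_def by auto
    have Apos: "A > 0" unfolding A_def by (rule a_pos)
    have QX: "1 - Phi X = A" unfolding X_def A_def using Qx elim by simp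
    have Epos: "E > 0" unfolding E_def by simp
    have expm: "exp (- (((t p)\<^sup>2 - (x p)\<^sup>2) / 2)) = 1 / E"
      unfolding E_def by (simp add: exp_minus field_simps)
    have phiX: "std_normal_density X = std_normal_density T * E"
    proof -
      have "- (T\<^sup>2) / 2 + (T\<^sup>2 - X\<^sup>2) / 2 = - (X\<^sup>2) / 2" by (simp add: field_simps)
      then have "exp (- (T\<^sup>2) / 2) * E = exp (- (X\<^sup>2) / 2)"
        unfolding E_def T_def X_def by (simp add: exp_add[symmetric])
      then show ?thesis unfolding std_normal_density_def by (simp add: mult.assoc)
    qed
    have phiT: "std_normal_density T > 0" by (simp add: std_normal_density_def)
    have tt: "(Phi_inv \<epsilon> - mu_p \<alpha> p) / tau_p p = T" unfolding T_def t_def q_def \<tau>_def ..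
    show ?case
      unfolding tt expm unfolding T_def[symmetric] X_def[symmetric] A_def[symmetric]
      unfolding m_def QX phiX using T2 X2 Apos Epos phiT
      by (simp add: field_simps)
  qed
  from Lim_transform_eventually[OF lim this]
  have fin: "(\<lambda>p. real p * (1 - Phi ((Phi_inv \<epsilon> - mu_p \<alpha> p) / tau_p p))) \<longlonglongrightarrow> \<alpha> * (1 / 1) * 1 * exp (- ((2 * q + 1) / 2))" .
  have h: "- ((2 * q + 1) / 2) = - Phi_inv \<epsilon> - 1/2" unfolding q_def by (simp add: field_simps)
  show ?thesis using fin unfolding h by simp
qed

theorem proposition3:
  fixes \<alpha> \<epsilon> :: real
    and M :: "nat \<Rightarrow> 'a measure"
    and \<beta> :: "nat \<Rightarrow> nat \<Rightarrow> 'a \<Rightarrow> real"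
  assumes "\<alpha> > 0" and "0 < \<epsilon>" and "\<epsilon> < 1"
    and "\<And>p. p \<ge> 2 \<Longrightarrow> prob_space (M p)"
    and "\<And>p. p \<ge> 2 \<Longrightarrow> prob_space.indep_vars (M p) (\<lambda>_. borel) (\<beta> p) {1..p}"
    and "\<And>p j. p \<ge> 2 \<Longrightarrow> j \<in> {1..p} \<Longrightarrow>
           distributed (M p) lborel (\<beta> p j) (normal_density (mu_p \<alpha> p) (tau_p p))"
  shows "(\<lambda>p. prob_space.expectation (M p)
              (\<lambda>\<omega>. real (card {j \<in> {1..p}. Phi (\<beta> p j \<omega>) > \<epsilon>})))
         \<longlonglongrightarrow> \<alpha> * exp (- Phi_inv \<epsilon> - 1/2)"
proof -
  have lim: "(\<lambda>p. real p * (1 - Phi ((Phi_inv \<epsilon> - mu_p \<alpha> p) / tau_p p))) \<longlonglongrightarrow> \<alpha> * exp (- Phi_inv \<epsilon> - 1/2)"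
    by (rule main_limit[OF assms(1-3)])
  have "eventually (\<lambda>p. real p * (1 - Phi ((Phi_inv \<epsilon> - mu_p \<alpha> p) / tau_p p)) =
      prob_space.expectation (M p) (\<lambda>\<omega>. real (card {j \<in> {1..p}. Phi (\<beta> p j \<omega>) > \<epsilon>}))) sequentially"
    using eventually_ge_at_top[of 2]
  proof eventually_elim
    case (elim p)
    have "ln (real p) > 0" using elim by simp
    then have tpos: "tau_p p > 0" by (simp add: tau_p_def)
    show ?case using expect_formula[OF assms(4)[OF elim] assms(2,3) tpos assms(6)[OF elim]] by simp
  qed
  from Lim_transform_eventually[OF lim this] show ?thesis .
qed
end
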